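(* Let $R$ be a binary relation on $U$ and $x\in U$. The following are equivalent: (i) $R(x)$ is completely join-prime in $\wp(U)^{\vartriangle}$; (ii) $R(x)\not\subseteq\bigcup\{R(y)\mid y\in U,\ R(x)\not\subseteq R(y)\}$; (iii) there exists $w\in R(x)$ such that for all $y\in U$, $w\in R(y)$ implies $R(x)\subseteq R(y)$. Consequently $\mathcal J_p(\wp(U)^{\vartriangle})=\{R(x)\mid x\in U,\ \mathfrak{core}R(x)\neq\emptyset\}$ and $\mathcal J_p(\wp(U)^{\blacktriangle})=\{\breve R(x)\mid x\in U,\ \mathfrak{core}\breve R(x)\neq\emptyset\}$.
   Context: Let $U$ be a set and $R\subseteq U\times U$ a binary relation. For $x\in U$, $R(x)=\{y\in U\mid (x,y)\in R\}$ and $\breve R(x)=\{y\in U\mid (y,x)\in R\}$. $\mathfrak{core}R(x)=\{w\in R(x)\mid \text{for all }y\in U,\ w\in R(y)\text{ implies }R(x)\subseteq R(y)\}$, and $\mathfrak{core}\breve R(x)$ is defined likewise with $\breve R$ in place of $R$. For $X\subseteq U$: $X^{\blacktriangle}=\{x\in U\mid R(x)\cap X\neq\emptyset\}$ and $X^{\vartriangle}=\{x\in U\mid \breve R(x)\cap X\neq\emptyset\}$, so $\{x\}^{\vartriangle}=R(x)$, $\{x\}^{\blacktriangle}=\breve R(x)$. $\wp(U)^{\blacktriangle}=\{X^{\blacktriangle}\mid X\subseteq U\}$, $\wp(U)^{\vartriangle}=\{X^{\vartriangle}\mid X\subseteq U\}$, complete lattices under $\subseteq$ with joins given by unions. An element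 $p$ of a complete lattice $L$ is completely join-prime if $p\le\bigvee X$ implies $p\le x$ for some $x\in X$, for every $X\subseteq L$; $\mathcal J_p(L)$ denotes the set of such elements. *)

theory Defs
  imports Main
begin

text \<open>The universe U is modelled as the type 'a (U = UNIV); R :: 'a rel.\<close>

definition Rimg :: "'a rel \<Rightarrow> 'a \<Rightarrow> 'a set" where
  "Rimg R x = {y. (x, y) \<in> R}"

definition Rconv :: "'a rel \<Rightarrow> 'a \<Rightarrow> 'a set" where
  "Rconv R x = {y. (y, x) \<in> R}"

definition core :: "'a rel \<Rightarrow> 'a \<Rightarrow> 'a set" where
  "core R x = {w \<in> Rimg R x. \<forall>y. w \<in> Rimg R y \<longrightarrow> Rimg R x \<subseteq> Rimg R y}"

definition bup :: "'a rel \<Rightarrow> 'a set \<Rightarrow> 'a set" where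
  "bup R X = {x. Rimg R x \<inter> X \<noteq> {}}"

definition wup :: "'a rel \<Rightarrow> 'a set \<Rightarrow> 'a set" where
  "wup R X = {x. Rconv R x \<inter> X \<noteq> {}}"

definition bup_lattice :: "'a rel \<Rightarrow> 'a set set" where
  "bup_lattice R = {bup R X | X. True}"

definition wup_lattice :: "'a rel \<Rightarrow> 'a set set" where
  "wup_lattice R = {wup R X | X. True}"

text \<open>Completely join-prime elements of a complete lattice L of sets, ordered by
  inclusion, whose joins are unions (as is the case for the lattices above).\<close>
definition cjp :: "'a set set \<Rightarrow> 'a set \<Rightarrow> bool" where
  "cjp L p \<longleftrightarrow> p \<in> L \<and> (\<forall>S \<subseteq> L. p \<subseteq> \<Union>S \<longrightarrow> (\<exists>s\<in>S. p \<subseteq> s))"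

definition Jp :: "'a set set \<Rightarrow> 'a set set" where
  "Jp L = {p. cjp L p}"

end

theory Submission
  imports Defs
begin

lemma wup_eq: "wup R X = \<Union> (Rimg R ` X)"
  by (auto simp: wup_def Rconv_def Rimg_def)

lemma Rimg_in: "Rimg R x \<in> wup_lattice R"
  unfolding wup_lattice_def by (rule CollectI, rule exI[of _ "{x}"]) (simp add: wup_eq)

lemma cjp_core: "cjp (wup_lattice R) (Rimg R x) \<longleftrightarrow> core R x \<noteq> {}"
proof
  assume c: "cjp (wup_lattice R) (Rimg R x)"
  show "core R x \<noteq> {}"
  proof
    assume e: "core R x = {}"
    let ?S = "{Rimg R y | y. \<not> Rimg R x \<subseteq> Rimg R y}"
    have "?S \<subseteq> wup_lattice R"
    proof (rule subsetI)
      fix s assume "s \<in> ?S"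
      then obtain y where "s = Rimg R y" by blast
      then show "s \<in> wup_lattice R" by (simp add: Rimg_in)
    qed
    moreover have "Rimg R x \<subseteq> \<Union>?S"
    proof
      fix w assume w: "w \<in> Rimg R x"
      then have "w \<notin> core R x" using e by blast
      then obtain y where "w \<in> Rimg R y" "\<not> Rimg R x \<subseteq> Rimg R y"
        using w unfolding core_def by blast
      then show "w \<in> \<Union>?S" by blast
    qed
    ultimately obtain s where "s \<in> ?S" "Rimg R x \<subseteq> s" using c unfolding cjp_def by blast
    then show False by blast
  qed
next
  assume "core R x \<noteq> {}"
  then obtain w where w: "w \<in> Rimg R x" and h: "\<And>y. w \<in> Rimg R y \<Longrightarrow> Rimg R x \<subseteq> Rimg R y"
    unfolding core_def by blast
  show "cjp (wup_lattice R) (Rimg R x)"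
    unfolding cjp_def
  proof (intro conjI Rimg_in allI impI)
    fix S assume S: "S \<subseteq> wup_lattice R" and sub: "Rimg R x \<subseteq> \<Union>S"
    then obtain s where s: "s \<in> S" "w \<in> s" using w by blast
    then obtain X where X: "s = wup R X" using S unfolding wup_lattice_def by blast
    then obtain z where z: "z \<in> X" "w \<in> Rimg R z" using s by (auto simp: wup_eq)
    have "Rimg R x \<subseteq> Rimg R z" by (rule h) (rule z(2))
    also have "Rimg R z \<subseteq> s" using z(1) X by (auto simp: wup_eq)
    finally have "Rimg R x \<subseteq> s" .
    then show "\<exists>s\<in>S. Rimg R x \<subseteq> s" using s by blast
  qed
qed

lemma Jp_wup: "Jp (wup_lattice R) = {Rimg R x | x. core R x \<noteq> {}}"
proof (rule set_eqI, rule iffI)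
  fix p assume "p \<in> Jp (wup_lattice R)"
  then have c: "cjp (wup_lattice R) p" by (simp add: Jp_def)
  then obtain X where X: "p = wup R X" unfolding cjp_def wup_lattice_def by blast
  let ?S = "Rimg R ` X"
  have "?S \<subseteq> wup_lattice R"
    proof (rule subsetI)
      fix s assume "s \<in> ?S"
      then obtain y where "s = Rimg R y" by blast
      then show "s \<in> wup_lattice R" by (simp add: Rimg_in)
    qed
  moreover have "p \<subseteq> \<Union>?S" using X by (simp add: wup_eq)
  ultimately have "\<exists>s\<in>?S. p \<subseteq> s" using c unfolding cjp_def by blast
  then obtain x where x: "x \<in> X" "p \<subseteq> Rimg R x" by blast
  have "Rimg R x \<subseteq> p" using X x(1) by (auto simp: wup_eq)
  then have px: "p = Rimg R x" using x(2) by (rule subset_antisym[rotated])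
  then have "core R x \<noteq> {}" using c cjp_core[of R x] by simp
  then show "p \<in> {Rimg R x | x. core R x \<noteq> {}}" using px by blast
next
  fix p assume "p \<in> {Rimg R x | x. core R x \<noteq> {}}"
  then obtain x where "p = Rimg R x" "core R x \<noteq> {}" by blast
  then show "p \<in> Jp (wup_lattice R)" using cjp_core[of R x] by (simp add: Jp_def)
qed

lemma bup_wup: "bup_lattice R = wup_lattice (converse R)"
proof -
  have "bup R X = wup (converse R) X" for X
    by (auto simp: bup_def wup_def Rimg_def Rconv_def)
  then show ?thesis by (simp add: bup_lattice_def wup_lattice_def)
qed

lemma Rimg_conv: "Rimg (converse R) = Rconv R"
  by (auto simp: Rimg_def Rconv_def)

theorem mainTheorem10:
  fixes R :: "'a rel"
  shows "(\<forall>x.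
            (cjp (wup_lattice R) (Rimg R x) \<longleftrightarrow>
               \<not> Rimg R x \<subseteq> \<Union>{Rimg R y | y. \<not> Rimg R x \<subseteq> Rimg R y})
          \<and> (\<not> Rimg R x \<subseteq> \<Union>{Rimg R y | y. \<not> Rimg R x \<subseteq> Rimg R y} \<longleftrightarrow>
               (\<exists>w \<in> Rimg R x. \<forall>y. w \<in> Rimg R y \<longrightarrow> Rimg R x \<subseteq> Rimg R y)))
        \<and> Jp (wup_lattice R) = {Rimg R x | x. core R x \<noteq> {}}
        \<and> Jp (bup_lattice R) = {Rconv R x | x. core (converse R) x \<noteq> {}}"
proof (intro conjI allI)
  fix x
  have e: "(\<not> Rimg R x \<subseteq> \<Union>{Rimg R y | y. \<not> Rimg R x \<subseteq> Rimg R y}) \<longleftrightarrow>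
               (\<exists>w \<in> Rimg R x. \<forall>y. w \<in> Rimg R y \<longrightarrow> Rimg R x \<subseteq> Rimg R y)"
  proof
    assume "\<not> Rimg R x \<subseteq> \<Union>{Rimg R y | y. \<not> Rimg R x \<subseteq> Rimg R y}"
    then obtain w where w: "w \<in> Rimg R x" "w \<notin> \<Union>{Rimg R y | y. \<not> Rimg R x \<subseteq> Rimg R y}"
      by (meson subsetI)
    have "\<forall>y. w \<in> Rimg R y \<longrightarrow> Rimg R x \<subseteq> Rimg R y"
    proof (intro allI impI)
      fix y assume wy: "w \<in> Rimg R y"
      show "Rimg R x \<subseteq> Rimg R y" using w(2)
      proof (rule contrapos_np)
        assume "\<not> Rimg R x \<subseteq> Rimg R y"
        then have "Rimg R y \<in> {Rimg R y | y. \<not> Rimg R x \<subseteq> Rimg R y}" by auto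
        then show "w \<in> \<Union>{Rimg R y | y. \<not> Rimg R x \<subseteq> Rimg R y}" using wy by (rule UnionI)
      qed
    qed
    then show "\<exists>w \<in> Rimg R x. \<forall>y. w \<in> Rimg R y \<longrightarrow> Rimg R x \<subseteq> Rimg R y" using w(1) by blast
  next
    assume "\<exists>w \<in> Rimg R x. \<forall>y. w \<in> Rimg R y \<longrightarrow> Rimg R x \<subseteq> Rimg R y"
    then obtain w where w: "w \<in> Rimg R x" "\<forall>y. w \<in> Rimg R y \<longrightarrow> Rimg R x \<subseteq> Rimg R y" by blast
    have "w \<notin> \<Union>{Rimg R y | y. \<not> Rimg R x \<subseteq> Rimg R y}" using w(2) by blast
    then show "\<not> Rimg R x \<subseteq> \<Union>{Rimg R y | y. \<not> Rimg R x \<subseteq> Rimg R y}" using w(1) by blast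
  qed
  show "(\<not> Rimg R x \<subseteq> \<Union>{Rimg R y | y. \<not> Rimg R x \<subseteq> Rimg R y}) \<longleftrightarrow>
               (\<exists>w \<in> Rimg R x. \<forall>y. w \<in> Rimg R y \<longrightarrow> Rimg R x \<subseteq> Rimg R y)" by (rule e)
  show "cjp (wup_lattice R) (Rimg R x) \<longleftrightarrow>
               \<not> Rimg R x \<subseteq> \<Union>{Rimg R y | y. \<not> Rimg R x \<subseteq> Rimg R y}"
    unfolding e cjp_core core_def by auto
next
  show "Jp (wup_lattice R) = {Rimg R x | x. core R x \<noteq> {}}" by (rule Jp_wup)
  show "Jp (bup_lattice R) = {Rconv R x | x. core (converse R) x \<noteq> {}}"
    using Jp_wup[of "converse R"] by (simp add: bup_wup Rimg_conv)
qed

end
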